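(* Let $a_1\in\mathbb C$, $a_2\in\mathbb R$ and $\theta\in[0,2\pi)$ satisfy $2|a_1|+|a_2|<\frac{1}{4(1+\varepsilon)^3}$. Then the map $f:\Delta\to\mathbb C^2$, $f(\zeta)=\big(e^{i\theta}\zeta,\ e^{2i\theta}\zeta(a_1+a_2\zeta+\overline{a_1}\zeta^2)\big)$, satisfies $f(\Delta)\subset\Omega$, and $f$ is both a complex geodesic and an infinitesimal complex geodesic of $\Omega$.
   Context: $\Delta$ denotes the unit disc in $\mathbb C$ and $\Delta_r$ the disc of radius $r$ centered at $0$. Fix $0<\varepsilon<\frac{1}{100}$. Let $\rho(z,w)=|z|^2+|w|^2-\operatorname{Re}(\bar z^4w^2)-1$ on $\mathbb C^2$, and $\Omega=\{\rho<0\}\cap\big(\Delta_{1+\varepsilon}\times\Delta_{\frac{1}{4(1+\varepsilon)^3}}\big)$. $K_\Omega$ and $d_\Omega$ denote the Kobayashi pseudometric and pseudodistance. A holomorphic map $f:\Delta\to\Omega$ is a complex geodesic if $d_\Omega(f(\zeta),f(\zeta'))=d_\Delta(\zeta,\zeta')$ for all $\zeta,\zeta'\in\Delta$, and an infinitesimal complex geodesic if $K_\Omega(f(\zeta),d_\zeta f(v_0))=K_\Delta(\zeta,v_0)$ for all $\zeta\in\Delta$, $v_0\in\mathbb C$. *)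

theory Defs
  imports "HOL-Analysis.Analysis"
begin

definition unit_disc :: "complex set" where
  "unit_disc = ball 0 1"

definition rho_fun :: "complex \<times> complex \<Rightarrow> real" where
  "rho_fun p = (let z = fst p; w = snd p in
      (cmod z)^2 + (cmod w)^2 - Re ((cnj z)^4 * w^2) - 1)"

definition Omega :: "real \<Rightarrow> (complex \<times> complex) set" where
  "Omega eps = {p. rho_fun p < 0 \<and> cmod (fst p) < 1 + eps
                   \<and> cmod (snd p) < 1 / (4 * (1 + eps)^3)}"

definition hol_disc_map :: "(complex \<times> complex) set \<Rightarrow> (complex \<Rightarrow> complex \<times> complex) \<Rightarrow> bool" where
  "hol_disc_map D f \<longleftrightarrow> (\<lambda>z. fst (f z)) holomorphic_on unit_disc
      \<and> (\<lambda>z. snd (f z)) holomorphic_on unit_disc \<and> f ` unit_disc \<subseteq> D"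

definition deriv2 :: "(complex \<Rightarrow> complex \<times> complex) \<Rightarrow> complex \<Rightarrow> complex \<times> complex" where
  "deriv2 f z = (deriv (\<lambda>t. fst (f t)) z, deriv (\<lambda>t. snd (f t)) z)"

definition poincare_dist :: "complex \<Rightarrow> complex \<Rightarrow> real" where
  "poincare_dist a b = artanh (cmod (a - b) / cmod (1 - cnj a * b))"

definition poincare_metric :: "complex \<Rightarrow> complex \<Rightarrow> real" where
  "poincare_metric z v = cmod v / (1 - (cmod z)^2)"

definition kobayashi_metric :: "(complex \<times> complex) set \<Rightarrow> complex \<times> complex \<Rightarrow> complex \<times> complex \<Rightarrow> real" where
  "kobayashi_metric D p v = Inf {cmod \<alpha> | \<alpha> f. hol_disc_map D f \<and> f 0 = p
       \<and> (\<alpha> * fst (deriv2 f 0), \<alpha> * snd (deriv2 f 0)) = v}"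

text \<open>Kobayashi pseudodistance: infimum over holomorphic chains of the sum of Poincare
  distances (Kobayashi's original definition).\<close>
definition kobayashi_dist :: "(complex \<times> complex) set \<Rightarrow> complex \<times> complex \<Rightarrow> complex \<times> complex \<Rightarrow> real" where
  "kobayashi_dist D p q = Inf {(\<Sum>j<n. poincare_dist (a j) (b j)) | (n::nat) (a::nat \<Rightarrow> complex) (b::nat \<Rightarrow> complex) (f::nat \<Rightarrow> complex \<Rightarrow> complex \<times> complex).
       n \<ge> 1 \<and> (\<forall>j<n. hol_disc_map D (f j) \<and> a j \<in> unit_disc \<and> b j \<in> unit_disc)
       \<and> f 0 (a 0) = p \<and> f (n - 1) (b (n - 1)) = q
       \<and> (\<forall>j. j + 1 < n \<longrightarrow> f j (b j) = f (j + 1) (a (j + 1)))}"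

definition complex_geodesic :: "(complex \<times> complex) set \<Rightarrow> (complex \<Rightarrow> complex \<times> complex) \<Rightarrow> bool" where
  "complex_geodesic D f \<longleftrightarrow> hol_disc_map D f \<and>
     (\<forall>z\<in>unit_disc. \<forall>z'\<in>unit_disc. kobayashi_dist D (f z) (f z') = poincare_dist z z')"

definition inf_complex_geodesic :: "(complex \<times> complex) set \<Rightarrow> (complex \<Rightarrow> complex \<times> complex) \<Rightarrow> bool" where
  "inf_complex_geodesic D f \<longleftrightarrow> hol_disc_map D f \<and>
     (\<forall>z\<in>unit_disc. \<forall>v0. kobayashi_metric D (f z)
          (v0 * fst (deriv2 f z), v0 * snd (deriv2 f z)) = poincare_metric z v0)"

end

theory Submission
  imports Defs "HOL-Complex_Analysis.Complex_Analysis"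
begin


lemma rho_step1:
  fixes e z q :: complex
  assumes "cmod e = 1"
  shows "rho_fun (e*z, e^2*z*q) = (cmod z)^2 + (cmod z)^2*(cmod q)^2 - Re (cnj z^4 * z^2 * q^2) - 1"
proof -
  have ee: "cnj e * e = 1" using assms by (metis complex_norm_square mult.commute of_real_1 power_one)
  have "cnj (e*z)^4 * (e^2*z*q)^2 = (cnj e * e)^4 * (cnj z^4 * z^2 * q^2)"
    by (simp add: algebra_simps power_mult_distrib eval_nat_numeral)
  then have eq: "cnj (e*z)^4 * (e^2*z*q)^2 = cnj z^4 * z^2 * q^2" using ee by simp
  have n: "cmod (e^2*z*q) = cmod z * cmod q" using assms by (simp add: norm_mult norm_power)
  show ?thesis unfolding rho_fun_def Let_def fst_conv snd_conv eq n
    using assms by (simp add: norm_mult power_mult_distrib)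
qed

lemma rho_step2:
  fixes x y b c d :: real
  defines "z \<equiv> Complex x y" and "a \<equiv> Complex b c"
  defines "q \<equiv> a + complex_of_real d * z + cnj a * z^2"
  defines "t \<equiv> x^2 + y^2"
  shows "t + t*(cmod q)^2 - Re (cnj z^4 * z^2 * q^2) - 1
     = -(1-t)*(1 - t*(1+t)*(cmod q)^2 - 2*t^2*(1-t)*(c*x - b*y)^2)"
  unfolding z_def a_def q_def t_def cmod_power2
  by (simp add: power2_eq_square eval_nat_numeral algebra_simps)



lemma artanh_mono_real:
  fixes x y :: real
  assumes "0 \<le> x" "x \<le> y" "y < 1"
  shows "artanh x \<le> artanh y"
proof -
  have "(1+x)/(1-x) \<le> (1+y)/(1-y)"
    using assms by (simp add: divide_simps) (simp add: algebra_simps)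
  moreover have "0 < (1+x)/(1-x)" using assms by simp
  ultimately show ?thesis unfolding artanh_def by simp
qed

lemma artanh_add_real:
  fixes s t :: real
  assumes "0 \<le> s" "s < 1" "0 \<le> t" "t < 1"
  shows "artanh ((s+t)/(1+s*t)) = artanh s + artanh t"
proof -
  have p: "0 < 1 + s*t" using assms by (simp add: add_pos_nonneg)
  have q1: "1 + (s+t)/(1+s*t) = (1+s)*(1+t)/(1+s*t)" using p by (simp add: field_simps)
  have q2: "1 - (s+t)/(1+s*t) = (1-s)*(1-t)/(1+s*t)" using p by (simp add: field_simps)
  have "(1 + (s+t)/(1+s*t)) / (1 - (s+t)/(1+s*t)) = ((1+s)/(1-s)) * ((1+t)/(1-t))"
    unfolding q1 q2 using p by simp
  moreover have "ln (((1+s)/(1-s)) * ((1+t)/(1-t))) = ln ((1+s)/(1-s)) + ln ((1+t)/(1-t))"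
    using assms by (intro ln_mult_pos) auto
  ultimately show ?thesis unfolding artanh_def by (simp add: add_divide_distrib)
qed

lemma pd_mob: "poincare_dist a b = artanh (cmod (Moebius_function 0 a b))"
  unfolding poincare_dist_def Moebius_function_def
  by (simp add: norm_divide norm_minus_commute)

lemma mob_in:
  assumes "a \<in> ball 0 1" "b \<in> ball 0 1"
  shows "Moebius_function 0 a b \<in> ball 0 1"
  using Moebius_function_norm_lt_1 assms by auto

lemma mob_inv:
  assumes "c \<in> ball 0 1" "a \<in> ball 0 1"
  shows "Moebius_function 0 (-c) (Moebius_function 0 c a) = a"
  using Moebius_function_compose[of "-c" c a] assms by auto

lemma mob_zero: "Moebius_function 0 (-a) 0 = a"
  by (simp add: Moebius_function_def)

lemma schwarz_pick:
  assumes h: "h holomorphic_on ball 0 1" and hb: "\<And>z. z \<in> ball 0 1 \<Longrightarrow> h z \<in> ball 0 1"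
    and a: "a \<in> ball 0 1" and b: "b \<in> ball 0 1"
  shows "cmod (Moebius_function 0 (h a) (h b)) \<le> cmod (Moebius_function 0 a b)"
proof -
  define \<phi> where "\<phi> = Moebius_function 0 (h a) \<circ> (h \<circ> Moebius_function 0 (-a))"
  have ma: "cmod (-a) < 1" using a by simp
  have hol: "\<phi> holomorphic_on ball 0 1"
    unfolding \<phi>_def
  proof (rule holomorphic_on_compose_gen)
    show "h \<circ> Moebius_function 0 (- a) holomorphic_on ball 0 1"
      by (rule holomorphic_on_compose_gen[OF Moebius_function_holomorphic[OF ma] h])
        (use mob_in[of "-a"] ma in auto)
    show "Moebius_function 0 (h a) holomorphic_on ball 0 1"
      using Moebius_function_holomorphic hb[OF a] by auto
    show "(h \<circ> Moebius_function 0 (- a)) ` ball 0 1 \<subseteq> ball 0 1"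
      using hb mob_in[of "-a"] ma by auto
  qed
  have z: "\<phi> 0 = 0" unfolding \<phi>_def by (simp add: mob_zero Moebius_function_eq_zero)
  have no: "norm (\<phi> z) < 1" if "norm z < 1" for z
  proof -
    have "Moebius_function 0 (-a) z \<in> ball 0 1" using mob_in[of "-a" z] ma that by auto
    then have "h (Moebius_function 0 (-a) z) \<in> ball 0 1" using hb by auto
    then show ?thesis unfolding \<phi>_def using mob_in[OF hb[OF a]] by auto
  qed
  define \<xi> where "\<xi> = Moebius_function 0 a b"
  have xi: "norm \<xi> < 1" using mob_in[OF a b] \<xi>_def by auto
  have "\<phi> \<xi> = Moebius_function 0 (h a) (h b)"
    unfolding \<phi>_def \<xi>_def using mob_inv[OF a b] by simp
  then show ?thesis using Schwarz_Lemma(1)[OF hol z no xi] \<xi>_def by simp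
qed

lemma pd_contract:
  assumes h: "h holomorphic_on ball 0 1" and hb: "\<And>z. z \<in> ball 0 1 \<Longrightarrow> h z \<in> ball 0 1"
    and a: "a \<in> ball 0 1" and b: "b \<in> ball 0 1"
  shows "poincare_dist (h a) (h b) \<le> poincare_dist a b"
  unfolding pd_mob
  by (rule artanh_mono_real) (use schwarz_pick[OF assms] mob_in[OF a b] in auto)

lemma pd_mob_inv:
  assumes c: "c \<in> ball 0 1" and a: "a \<in> ball 0 1" and b: "b \<in> ball 0 1"
  shows "poincare_dist (Moebius_function 0 c a) (Moebius_function 0 c b) = poincare_dist a b"
proof -
  have c': "cmod c < 1" "cmod (-c) < 1" using c by auto
  have 1: "poincare_dist (Moebius_function 0 c a) (Moebius_function 0 c b) \<le> poincare_dist a b"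
    by (rule pd_contract[OF Moebius_function_holomorphic[OF c'(1)]]) (use mob_in c a b in auto)
  have "poincare_dist (Moebius_function 0 (-c) (Moebius_function 0 c a)) (Moebius_function 0 (-c) (Moebius_function 0 c b))
        \<le> poincare_dist (Moebius_function 0 c a) (Moebius_function 0 c b)"
    by (rule pd_contract[OF Moebius_function_holomorphic[OF c'(2)]]) (use mob_in c a b in auto)
  then have 2: "poincare_dist a b \<le> poincare_dist (Moebius_function 0 c a) (Moebius_function 0 c b)"
    using mob_inv[OF c a] mob_inv[OF c b] by simp
  show ?thesis using 1 2 by linarith
qed

lemma delta_ineq:
  fixes u v :: complex
  assumes u: "cmod u < 1" and v: "cmod v < 1"
  shows "cmod (u - v) / cmod (1 - cnj u * v) \<le> (cmod u + cmod v) / (1 + cmod u * cmod v)"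
proof -
  define s where "s = cmod u"
  define t where "t = cmod v"
  define D where "D = (cmod (1 - cnj u * v))^2"
  define N where "N = (cmod (u - v))^2"
  have id: "D - N = (1 - s^2) * (1 - t^2)"
    unfolding D_def N_def s_def t_def
    by (cases u; cases v; simp add: cmod_power2; simp add: power2_eq_square algebra_simps)
  have s: "0 \<le> s" "s < 1" and t: "0 \<le> t" "t < 1" using u v s_def t_def by auto
  have "s^2 < 1" "t^2 < 1" using s t by (simp_all add: power_less_one_iff)
  then have pp: "0 < (1 - s^2) * (1 - t^2)" by simp
  have N0: "0 \<le> N" unfolding N_def by simp
  have Dpos: "0 < D" using id pp N0 by linarith
  have st: "0 < 1 + s*t" using s t by (simp add: add_pos_nonneg)
  have "cmod (1 - cnj u * v) \<le> 1 + s * t"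
    using norm_triangle_ineq4[of 1 "cnj u * v"] by (simp add: norm_mult s_def t_def)
  then have Dle: "D \<le> (1 + s*t)^2" unfolding D_def by (simp add: power_mono)
  have hh: "(s+t)^2 = (1 + s*t)^2 - (1 - s^2) * (1 - t^2)" by (simp add: power2_eq_square algebra_simps)
  have le: "(1 - s^2) * (1 - t^2) / (1 + s*t)^2 \<le> (1 - s^2) * (1 - t^2) / D"
    using Dle Dpos pp st by (intro divide_left_mono) auto
  have e1: "N / D = 1 - (1 - s^2) * (1 - t^2) / D"
  proof -
    have "N = D - (1 - s^2) * (1 - t^2)" using id by simp
    then show ?thesis using Dpos by (simp add: diff_divide_distrib)
  qed
  have e2: "((s+t)/(1+s*t))^2 = 1 - (1 - s^2) * (1 - t^2) / (1 + s*t)^2"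
    unfolding power_divide hh using st by (simp add: diff_divide_distrib)
  have "N / D \<le> ((s+t)/(1+s*t))^2" unfolding e1 e2 using le by simp
  then have "(sqrt N / sqrt D)^2 \<le> ((s+t)/(1+s*t))^2"
    using N0 Dpos by (simp add: power_divide)
  then have "sqrt N / sqrt D \<le> (s+t)/(1+s*t)"
    by (rule power2_le_imp_le) (use s t st in auto)
  moreover have "sqrt N = cmod (u - v)" "sqrt D = cmod (1 - cnj u * v)" unfolding N_def D_def by auto
  ultimately show ?thesis unfolding s_def t_def by simp
qed

lemma pd_triangle0:
  fixes u v :: complex
  assumes u: "cmod u < 1" and v: "cmod v < 1"
  shows "poincare_dist u v \<le> artanh (cmod u) + artanh (cmod v)"
proof -
  have s: "0 \<le> cmod u" "cmod u < 1" and t: "0 \<le> cmod v" "cmod v < 1" using u v by auto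
  have lt: "(cmod u + cmod v) / (1 + cmod u * cmod v) < 1"
  proof -
    have "0 < (1 - cmod u) * (1 - cmod v)" using s t by simp
    then have "cmod u + cmod v < 1 + cmod u * cmod v" by (simp add: algebra_simps)
    then show ?thesis using s t by (simp add: divide_simps add_pos_nonneg)
  qed
  have "poincare_dist u v \<le> artanh ((cmod u + cmod v) / (1 + cmod u * cmod v))"
    unfolding poincare_dist_def
    by (rule artanh_mono_real) (use delta_ineq[OF u v] lt in auto)
  also have "\<dots> = artanh (cmod u) + artanh (cmod v)" by (rule artanh_add_real) (use s t in auto)
  finally show ?thesis .
qed

lemma pd_triangle:
  assumes a: "a \<in> ball 0 1" and b: "b \<in> ball 0 1" and c: "c \<in> ball 0 1"
  shows "poincare_dist a c \<le> poincare_dist a b + poincare_dist b c"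
proof -
  define u where "u = Moebius_function 0 b a"
  define v where "v = Moebius_function 0 b c"
  have u: "cmod u < 1" and v: "cmod v < 1" using mob_in[OF b a] mob_in[OF b c] u_def v_def by auto
  have 1: "poincare_dist a c = poincare_dist u v" using pd_mob_inv[OF b a c] u_def v_def by simp
  have "poincare_dist a b = poincare_dist u 0"
    using pd_mob_inv[OF b a b] u_def by (simp add: Moebius_function_eq_zero)
  then have 2: "poincare_dist a b = artanh (cmod u)" by (simp add: poincare_dist_def)
  have "poincare_dist b c = poincare_dist 0 v"
    using pd_mob_inv[OF b b c] v_def by (simp add: Moebius_function_eq_zero)
  then have 3: "poincare_dist b c = artanh (cmod v)" by (simp add: poincare_dist_def)
  show ?thesis using pd_triangle0[OF u v] 1 2 3 by simp
qed

lemma chain_bound: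
  fixes m n :: nat
  assumes h: "\<And>j. j < n \<Longrightarrow> h j holomorphic_on ball 0 1 \<and> (\<forall>z\<in>ball 0 1. h j z \<in> ball 0 1)"
    and ab: "\<And>j. j < n \<Longrightarrow> a j \<in> ball 0 1 \<and> b j \<in> ball 0 1"
    and ch: "\<And>j. j + 1 < n \<Longrightarrow> h j (b j) = h (j+1) (a (j+1))"
  shows "1 \<le> m \<Longrightarrow> m \<le> n \<Longrightarrow> poincare_dist (h 0 (a 0)) (h (m-1) (b (m-1))) \<le> (\<Sum>j<m. poincare_dist (a j) (b j))"
proof (induction m)
  case 0 then show ?case by simp
next
  case (Suc m)
  show ?case
  proof (cases "m = 0")
    case True
    then show ?thesis using pd_contract[of "h 0" "a 0" "b 0"] h[of 0] ab[of 0] Suc.prems by auto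
  next
    case False
    have mn: "m < n" using Suc.prems by simp
    have IH: "poincare_dist (h 0 (a 0)) (h (m-1) (b (m-1))) \<le> (\<Sum>j<m. poincare_dist (a j) (b j))"
      using Suc.IH Suc.prems False by simp
    have eq: "h (m-1) (b (m-1)) = h m (a m)" using ch[of "m-1"] False mn by simp
    have P: "h 0 (a 0) \<in> ball 0 1" using h[of 0] ab[of 0] mn by auto
    have Q: "h m (a m) \<in> ball 0 1" "h m (b m) \<in> ball 0 1" using h[of m] ab[of m] mn by auto
    have "poincare_dist (h 0 (a 0)) (h m (b m)) \<le> poincare_dist (h 0 (a 0)) (h m (a m)) + poincare_dist (h m (a m)) (h m (b m))"
      by (rule pd_triangle[OF P Q])
    also have "\<dots> \<le> (\<Sum>j<m. poincare_dist (a j) (b j)) + poincare_dist (a m) (b m)"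
      using IH eq pd_contract[of "h m" "a m" "b m"] h[OF mn] ab[OF mn] by (intro add_mono) auto
    finally show ?thesis by simp
  qed
qed

lemma sp_deriv:
  assumes h: "h holomorphic_on ball 0 1" and hb: "\<And>z. z \<in> ball 0 1 \<Longrightarrow> h z \<in> ball 0 1"
  shows "cmod (deriv h 0) \<le> 1 - (cmod (h 0))^2"
proof -
  define c where "c = h 0"
  have c: "c \<in> ball 0 1" using hb c_def by auto
  have c1: "cmod c < 1" using c by simp
  have ne: "1 - cnj c * c \<noteq> 0"
  proof
    assume "1 - cnj c * c = 0"
    then have "cnj c * c = 1" by simp
    then have "(cmod c)^2 = 1" by (metis complex_norm_square mult.commute of_real_eq_1_iff)
    then show False using c1 norm_ge_zero[of c] by (auto simp add: power2_eq_1_iff)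
  qed
  define \<phi> where "\<phi> = Moebius_function 0 c \<circ> h"
  have hol: "\<phi> holomorphic_on ball 0 1" unfolding \<phi>_def
    by (rule holomorphic_on_compose_gen[OF h Moebius_function_holomorphic[OF c1]]) (use hb in auto)
  have z: "\<phi> 0 = 0" unfolding \<phi>_def c_def by (simp add: Moebius_function_eq_zero)
  have no: "norm (\<phi> z) < 1" if "norm z < 1" for z
    unfolding \<phi>_def using mob_in[OF c hb[of z]] that by auto
  have Meq: "Moebius_function 0 c = (\<lambda>w. (w - c) / (1 - cnj c * w))"
    by (simp add: fun_eq_iff Moebius_function_def)
  have dM: "(Moebius_function 0 c has_field_derivative (1 / (1 - cnj c * c))) (at (h 0))"
    unfolding Meq c_def[symmetric]
    by (rule derivative_eq_intros refl | use ne in simp)+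
  have dh: "(h has_field_derivative deriv h 0) (at 0)"
    by (rule holomorphic_derivI[OF h]) auto
  have "(\<phi> has_field_derivative (1 / (1 - cnj c * c)) * deriv h 0) (at 0)"
    unfolding \<phi>_def o_def by (rule DERIV_chain2[OF dM dh])
  then have d: "deriv \<phi> 0 = (1 / (1 - cnj c * c)) * deriv h 0" by (rule DERIV_imp_deriv)
  have "norm (0::complex) < 1" by simp
  then have n1: "norm (deriv \<phi> 0) \<le> 1" using Schwarz_Lemma(2)[OF hol z no] by blast
  have ceq: "1 - cnj c * c = complex_of_real (1 - (cmod c)^2)"
  proof -
    have "cnj c * c = complex_of_real ((cmod c)^2)" by (metis complex_norm_square mult.commute)
    then show ?thesis by (simp only: of_real_diff of_real_1)
  qed
  have kp: "0 < 1 - (cmod c)^2" using c1 by (simp add: power_less_one_iff)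
  have "deriv h 0 = (1 - cnj c * c) * deriv \<phi> 0" using d ne by simp
  then have "cmod (deriv h 0) = cmod (complex_of_real (1 - (cmod c)^2)) * cmod (deriv \<phi> 0)"
    unfolding ceq by (simp only: norm_mult)
  also have "cmod (complex_of_real (1 - (cmod c)^2)) = 1 - (cmod c)^2"
    unfolding norm_of_real using kp by simp
  finally have "cmod (deriv h 0) = (1 - (cmod c)^2) * cmod (deriv \<phi> 0)" .
  also have "\<dots> \<le> (1 - (cmod c)^2) * 1" using n1 kp by (intro mult_left_mono) auto
  finally show ?thesis unfolding c_def by simp
qed



lemma omega_fst:
  assumes "p \<in> Omega eps" "0 < eps" "eps < 1"
  shows "cmod (fst p) < 1"
proof (rule ccontr)
  assume nr: "\<not> cmod (fst p) < 1"
  obtain z w where p: "p = (z, w)" by (cases p)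
  define r where "r = cmod z"
  define s where "s = cmod w"
  have rho: "r^2 + s^2 - Re ((cnj z)^4 * w^2) - 1 < 0" and r2: "r < 1 + eps"
    and s1: "s < 1 / (4 * (1 + eps)^3)"
    using assms(1) unfolding Omega_def rho_fun_def p r_def s_def by (auto simp: Let_def)
  have "1 \<le> (1+eps)^3" using assms by (simp add: one_le_power)
  then have "1 / (4 * (1 + eps)^3) \<le> 1/4" using assms by (intro divide_left_mono) auto
  then have s4: "s \<le> 1/4" using s1 by linarith
  have s0: "0 \<le> s" unfolding s_def by simp
  have r1: "1 \<le> r" using nr p r_def by simp
  have "Re ((cnj z)^4 * w^2) \<le> cmod ((cnj z)^4 * w^2)" by (rule complex_Re_le_cmod)
  also have "\<dots> = r^4 * s^2" unfolding r_def s_def by (simp add: norm_mult norm_power)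
  finally have "r^2 + s^2 - r^4 * s^2 - 1 < 0" using rho by linarith
  moreover have "r^2 + s^2 - r^4 * s^2 - 1 = (r^2 - 1) * (1 - s^2 * (1 + r^2))"
    by (simp add: algebra_simps power2_eq_square power4_eq_xxxx)
  moreover have "0 \<le> (r^2 - 1) * (1 - s^2 * (1 + r^2))"
  proof (rule mult_nonneg_nonneg)
    show "0 \<le> r^2 - 1" using r1 by (simp add: one_le_power)
    have "s^2 \<le> (1/4)^2" using s4 s0 by (intro power_mono) auto
    moreover have "r^2 \<le> 4"
    proof -
      have "r \<le> 2" using r2 assms by simp
      then have "r^2 \<le> 2^2" using r1 by (intro power_mono) auto
      then show ?thesis by simp
    qed
    ultimately have "s^2 * (1 + r^2) \<le> (1/4)^2 * 5"
      by (intro mult_mono) auto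
    moreover have "(1/4::real)^2 * 5 < 1" by (simp add: power2_eq_square)
    ultimately show "0 \<le> 1 - s^2 * (1 + r^2)" by linarith
  qed
  ultimately show False by linarith
qed

lemma f_in_Omega:
  fixes e a1 \<zeta> :: complex and a2 eps :: real
  assumes e: "cmod e = 1" and eps: "0 < eps"
    and bd: "2 * cmod a1 + \<bar>a2\<bar> < 1 / (4 * (1 + eps)^3)" and z: "cmod \<zeta> < 1"
  shows "(e*\<zeta>, e^2*\<zeta>*(a1 + complex_of_real a2 * \<zeta> + cnj a1 * \<zeta>^2)) \<in> Omega eps"
proof -
  define q where "q = a1 + complex_of_real a2 * \<zeta> + cnj a1 * \<zeta>^2"
  have "1 \<le> (1+eps)^3" using eps by (simp add: one_le_power)
  then have B14: "1 / (4 * (1 + eps)^3) \<le> 1/4" using eps by (intro divide_left_mono) auto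
  have z0: "0 \<le> cmod \<zeta>" by simp
  have n1: "cmod q \<le> cmod (a1 + complex_of_real a2 * \<zeta>) + cmod (cnj a1 * \<zeta>^2)"
    unfolding q_def by (rule norm_triangle_ineq)
  have n2: "cmod (a1 + complex_of_real a2 * \<zeta>) \<le> cmod a1 + cmod (complex_of_real a2 * \<zeta>)"
    by (rule norm_triangle_ineq)
  have n3: "cmod (complex_of_real a2 * \<zeta>) \<le> \<bar>a2\<bar>"
  proof -
    have "cmod (complex_of_real a2 * \<zeta>) = \<bar>a2\<bar> * cmod \<zeta>" by (simp add: norm_mult)
    also have "\<dots> \<le> \<bar>a2\<bar> * 1" using z by (intro mult_left_mono) auto
    finally show ?thesis by simp
  qed
  have n4: "cmod (cnj a1 * \<zeta>^2) \<le> cmod a1"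
  proof -
    have "cmod \<zeta> ^2 \<le> 1" using z z0 by (simp add: power_le_one)
    then have "cmod a1 * cmod \<zeta> ^2 \<le> cmod a1 * 1" by (intro mult_left_mono) auto
    then show ?thesis by (simp add: norm_mult norm_power)
  qed
  have qb: "cmod q \<le> 2 * cmod a1 + \<bar>a2\<bar>" using n1 n2 n3 n4 by linarith
  have qB: "cmod q < 1 / (4 * (1 + eps)^3)" using qb bd by linarith
  have q4: "cmod q \<le> 1/4" using qB B14 by linarith
  have a8: "cmod a1 \<le> 1/8" using bd B14 by simp
  have c1: "cmod (e * \<zeta>) < 1 + eps" using e z eps by (simp add: norm_mult)
  have c2: "cmod (e^2 * \<zeta> * q) < 1 / (4 * (1 + eps)^3)"
  proof -
    have "cmod (e^2 * \<zeta> * q) = cmod \<zeta> * cmod q" using e by (simp add: norm_mult norm_power)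
    also have "\<dots> \<le> cmod q" using z by (simp add: mult_left_le_one_le)
    finally show ?thesis using qB by linarith
  qed
  obtain x y where zx: "\<zeta> = Complex x y" by (cases \<zeta>)
  obtain b c where ab: "a1 = Complex b c" by (cases a1)
  define t where "t = x^2 + y^2"
  have tz: "t = (cmod \<zeta>)^2" unfolding t_def zx cmod_power2 by simp
  have t0: "0 \<le> t" and t1: "t < 1" using tz z z0 by (auto simp: power_less_one_iff)
  have A: "rho_fun (e*\<zeta>, e^2*\<zeta>*q) = t + t*(cmod q)^2 - Re (cnj \<zeta>^4 * \<zeta>^2 * q^2) - 1"
    unfolding tz by (rule rho_step1[OF e])
  have B: "t + t*(cmod q)^2 - Re (cnj \<zeta>^4 * \<zeta>^2 * q^2) - 1 = -(1-t)*(1 - t*(1+t)*(cmod q)^2 - 2*t^2*(1-t)*(c*x - b*y)^2)"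
    unfolding zx ab q_def t_def by (rule rho_step2)
  have r: "rho_fun (e*\<zeta>, e^2*\<zeta>*q) = -(1-t)*(1 - t*(1+t)*(cmod q)^2 - 2*t^2*(1-t)*(c*x - b*y)^2)"
    using trans[OF A B] .
  have Q: "(cmod q)^2 \<le> 1/16"
  proof -
    have "(cmod q)^2 \<le> (1/4)^2" using q4 by (intro power_mono) auto
    also have "(1/4::real)^2 = 1/16" by (simp add: power2_eq_square)
    finally show ?thesis .
  qed
  have J: "(c*x - b*y)^2 \<le> 1/64"
  proof -
    have "(c*x - b*y)^2 \<le> (b^2 + c^2) * t"
    proof -
      have "(b^2 + c^2) * t = (c*x - b*y)^2 + (b*x + c*y)^2" unfolding t_def by (simp add: power2_eq_square algebra_simps)
      then show ?thesis by simp
    qed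
    also have "\<dots> \<le> (b^2 + c^2) * 1" using t1 by (intro mult_left_mono) auto
    also have "b^2 + c^2 = (cmod a1)^2" unfolding ab cmod_power2 by simp
    also have "(cmod a1)^2 * 1 \<le> (1/8)^2" using a8 by (simp add: power_mono)
    also have "(1/8::real)^2 = 1/64" by (simp add: power2_eq_square)
    finally show ?thesis .
  qed
  have T1: "t*(1+t)*(cmod q)^2 \<le> 2 * (1/16)"
  proof -
    have a: "t*(1+t) \<le> 2" using mult_mono[of t 1 "1+t" 2] t0 t1 by simp
    have "t*(1+t)*(cmod q)^2 \<le> 2*(cmod q)^2" using a by (rule mult_right_mono) simp
    then show ?thesis using Q by linarith
  qed
  have T2: "2*t^2*(1-t)*(c*x - b*y)^2 \<le> 2 * (1/64)"
  proof -
    have "t^2 \<le> 1" using t0 t1 by (simp add: power_le_one)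
    then have "t^2*(1-t) \<le> 1*1" using t0 t1 mult_mono[of "t^2" 1 "1-t" 1] by simp
    then have "t^2*(1-t)*(c*x - b*y)^2 \<le> 1 * (1/64)" using J t0 t1 mult_mono[of "t^2*(1-t)" 1 "(c*x - b*y)^2" "1/64"] by simp
    then show ?thesis by simp
  qed
  have br: "0 < 1 - t*(1+t)*(cmod q)^2 - 2*t^2*(1-t)*(c*x - b*y)^2" using T1 T2 by linarith
  have neg: "-(1-t) < (0::real)" using t1 by simp
  have "rho_fun (e*\<zeta>, e^2*\<zeta>*q) < 0" unfolding r by (rule mult_neg_pos[OF neg br])
  then show ?thesis using c1 c2 unfolding Omega_def q_def by simp
qed



theorem lemma2p2:
  fixes eps :: real and a1 :: complex and a2 :: real and \<theta> :: real
  assumes "0 < eps" and "eps < 1/100"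
    and "0 \<le> \<theta>" and "\<theta> < 2 * pi"
    and "2 * cmod a1 + \<bar>a2\<bar> < 1 / (4 * (1 + eps)^3)"
  defines "f \<equiv> (\<lambda>\<zeta>. (exp (\<i> * \<theta>) * \<zeta>,
                    exp (2 * \<i> * \<theta>) * \<zeta> * (a1 + complex_of_real a2 * \<zeta> + cnj a1 * \<zeta>^2)))"
  shows "f ` unit_disc \<subseteq> Omega eps \<and> complex_geodesic (Omega eps) f
         \<and> inf_complex_geodesic (Omega eps) f"
proof -
  define e where "e = exp (\<i> * complex_of_real \<theta>)"
  have e1: "cmod e = 1" unfolding e_def by simp
  have "e^2 = exp (\<i> * complex_of_real \<theta> + \<i> * complex_of_real \<theta>)"
    unfolding e_def power2_eq_square by (simp only: exp_add)
  also have "\<dots> = exp (2 * \<i> * complex_of_real \<theta>)" by (rule arg_cong[where f=exp]) simp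
  finally have e2: "exp (2 * \<i> * complex_of_real \<theta>) = e^2" by simp
  define P where "P = (\<lambda>\<zeta>. e^2 * \<zeta> * (a1 + complex_of_real a2 * \<zeta> + cnj a1 * \<zeta>^2))"
  have feq: "f = (\<lambda>\<zeta>. (e * \<zeta>, P \<zeta>))" unfolding f_def P_def e_def[symmetric] e2 by simp
  have ud: "unit_disc = ball 0 1" by (simp add: unit_disc_def)
  have inO: "f \<zeta> \<in> Omega eps" if "\<zeta> \<in> unit_disc" for \<zeta>
  proof -
    have z: "cmod \<zeta> < 1" using that unfolding ud by simp
    show ?thesis unfolding feq P_def by (rule f_in_Omega[OF e1 assms(1) assms(5) z])
  qed
  have img: "f ` unit_disc \<subseteq> Omega eps" using inO by auto
  have holP: "P holomorphic_on UNIV" unfolding P_def by (intro holomorphic_intros)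
  have holf: "hol_disc_map (Omega eps) f"
    unfolding hol_disc_map_def using img holP
    by (auto simp: feq intro!: holomorphic_intros intro: holomorphic_on_subset)
  have Ofst: "cmod (fst p) < 1" if "p \<in> Omega eps" for p
    using omega_fst[OF that assms(1)] assms(2) by simp
  have pdrot: "poincare_dist (e*a) (e*b) = poincare_dist a b" for a b
  proof -
    have ee: "cnj e * e = 1" using e1 by (metis complex_norm_square mult.commute of_real_1 power_one)
    have "cnj (e*a) * (e*b) = (cnj e * e) * (cnj a * b)" by (simp add: algebra_simps)
    then have X: "cnj (e*a) * (e*b) = cnj a * b" using ee by simp
    have "cmod (e*a - e*b) = cmod e * cmod (a - b)" by (simp add: norm_mult[symmetric] algebra_simps)
    then have Y: "cmod (e*a - e*b) = cmod (a - b)" using e1 by simp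
    show ?thesis unfolding poincare_dist_def X Y ..
  qed
  have geo: "kobayashi_dist (Omega eps) (f z) (f z') = poincare_dist z z'"
    if z: "z \<in> unit_disc" and z': "z' \<in> unit_disc" for z z'
    unfolding kobayashi_dist_def
  proof (rule cInf_eq_minimum)
    have "\<exists>(n::nat) (a::nat\<Rightarrow>complex) (b::nat\<Rightarrow>complex) (F::nat\<Rightarrow>complex\<Rightarrow>complex\<times>complex). poincare_dist z z' = (\<Sum>j<n. poincare_dist (a j) (b j)) \<and> n \<ge> 1
       \<and> (\<forall>j<n. hol_disc_map (Omega eps) (F j) \<and> a j \<in> unit_disc \<and> b j \<in> unit_disc)
       \<and> F 0 (a 0) = f z \<and> F (n - 1) (b (n - 1)) = f z'
       \<and> (\<forall>j. j + 1 < n \<longrightarrow> F j (b j) = F (j + 1) (a (j + 1)))"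
      by (rule exI[of _ "1::nat"], rule exI[of _ "\<lambda>_. z"], rule exI[of _ "\<lambda>_. z'"], rule exI[of _ "\<lambda>_. f"])
        (use holf z z' in auto)
    then show "poincare_dist z z' \<in> {(\<Sum>j<n. poincare_dist (a j) (b j)) | (n::nat) (a::nat \<Rightarrow> complex) (b::nat \<Rightarrow> complex) (F::nat \<Rightarrow> complex \<Rightarrow> complex \<times> complex).
       n \<ge> 1 \<and> (\<forall>j<n. hol_disc_map (Omega eps) (F j) \<and> a j \<in> unit_disc \<and> b j \<in> unit_disc)
       \<and> F 0 (a 0) = f z \<and> F (n - 1) (b (n - 1)) = f z'
       \<and> (\<forall>j. j + 1 < n \<longrightarrow> F j (b j) = F (j + 1) (a (j + 1)))}" by blast
  next
    fix x assume "x \<in> {(\<Sum>j<n. poincare_dist (a j) (b j)) | (n::nat) (a::nat \<Rightarrow> complex) (b::nat \<Rightarrow> complex) (F::nat \<Rightarrow> complex \<Rightarrow> complex \<times> complex).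
       n \<ge> 1 \<and> (\<forall>j<n. hol_disc_map (Omega eps) (F j) \<and> a j \<in> unit_disc \<and> b j \<in> unit_disc)
       \<and> F 0 (a 0) = f z \<and> F (n - 1) (b (n - 1)) = f z'
       \<and> (\<forall>j. j + 1 < n \<longrightarrow> F j (b j) = F (j + 1) (a (j + 1)))}"
    then obtain n a b F where x: "x = (\<Sum>j<(n::nat). poincare_dist (a j) (b j))" and n1: "n \<ge> 1"
      and hF: "\<forall>j<n. hol_disc_map (Omega eps) (F j) \<and> a j \<in> unit_disc \<and> b j \<in> unit_disc"
      and s: "F 0 (a 0) = f z" and t: "F (n - 1) (b (n - 1)) = f z'"
      and ch: "\<forall>j. j + 1 < n \<longrightarrow> F j (b j) = F (j + 1) (a (j + 1))"
      by blast
    define h where "h = (\<lambda>j \<zeta>. fst (F j \<zeta>))"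
    have "poincare_dist (h 0 (a 0)) (h (n-1) (b (n-1))) \<le> (\<Sum>j<n. poincare_dist (a j) (b j))"
    proof (rule chain_bound[OF _ _ _ n1 order_refl])
      fix j assume j: "j < n"
      then have hj: "hol_disc_map (Omega eps) (F j)" using hF by auto
      show "h j holomorphic_on ball 0 1 \<and> (\<forall>z\<in>ball 0 1. h j z \<in> ball 0 1)"
        using hj unfolding hol_disc_map_def h_def ud by (auto intro!: Ofst)
      show "a j \<in> ball 0 1 \<and> b j \<in> ball 0 1" using hF j ud by auto
    next
      fix j assume "j + 1 < n"
      then show "h j (b j) = h (j+1) (a (j+1))" using ch h_def by auto
    qed
    moreover have "h 0 (a 0) = e * z" "h (n-1) (b (n-1)) = e * z'" using s t h_def feq by auto
    ultimately show "poincare_dist z z' \<le> x" using x pdrot by simp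
  qed
  have dfst: "deriv (\<lambda>t. fst (f t)) z = e" for z
  proof -
    have "((\<lambda>t. e * t) has_field_derivative e) (at z)" by (rule derivative_eq_intros refl | simp)+
    then show ?thesis unfolding feq by (simp add: DERIV_imp_deriv)
  qed
  have inf: "kobayashi_metric (Omega eps) (f z) (v0 * fst (deriv2 f z), v0 * snd (deriv2 f z)) = poincare_metric z v0"
    if z: "z \<in> unit_disc" for z v0
  proof -
    define d2 where "d2 = deriv P z"
    have d2eq: "deriv (\<lambda>t. snd (f t)) z = d2" unfolding feq d2_def by simp
    have zc: "cmod z < 1" using z unfolding ud by simp
    have mz: "cmod (-z) < 1" using zc by simp
    define M where "M = Moebius_function 0 (-z)"
    define m' where "m' = 1 - cnj z * z"
    have kp: "0 < 1 - (cmod z)^2" using zc by (simp add: power_less_one_iff)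
    have m'eq: "m' = complex_of_real (1 - (cmod z)^2)"
    proof -
      have "cnj z * z = complex_of_real ((cmod z)^2)" by (metis complex_norm_square mult.commute)
      then show ?thesis unfolding m'_def by (simp only: of_real_diff of_real_1)
    qed
    have m'ne: "m' \<noteq> 0" using kp m'eq by (metis less_irrefl of_real_eq_0_iff)
    have cm': "cmod m' = 1 - (cmod z)^2" unfolding m'eq norm_of_real using kp by simp
    have M0: "M 0 = z" unfolding M_def by (rule mob_zero)
    have Meq: "M = (\<lambda>w. (w + z) / (1 + cnj z * w))" unfolding M_def by (simp add: fun_eq_iff Moebius_function_def)
    have dM: "(M has_field_derivative m') (at 0)"
      unfolding Meq m'_def by (rule derivative_eq_intros refl | simp)+
    have holM: "M holomorphic_on ball 0 1" unfolding M_def by (rule Moebius_function_holomorphic[OF mz])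
    have Mb: "M w \<in> ball 0 1" if "w \<in> ball 0 1" for w unfolding M_def using mob_in[of "-z" w] mz that by auto
    have dP: "(P has_field_derivative d2) (at (M 0))" unfolding M0 d2_def
      by (rule holomorphic_derivI[OF holP]) auto
    define g where "g = (\<lambda>t. f (M t))"
    have g1: "(\<lambda>t. fst (g t)) = (\<lambda>t. e * M t)" unfolding g_def feq by simp
    have g2: "(\<lambda>t. snd (g t)) = (\<lambda>t. P (M t))" unfolding g_def feq by simp
    have holg: "hol_disc_map (Omega eps) g"
      unfolding hol_disc_map_def g1 g2
    proof (intro conjI)
      show "(\<lambda>t. e * M t) holomorphic_on unit_disc" unfolding ud using holM by (intro holomorphic_intros)
      show "(\<lambda>t. P (M t)) holomorphic_on unit_disc" unfolding ud
        using holomorphic_on_compose_gen[OF holM holomorphic_on_subset[OF holP], of UNIV] by (simp add: o_def)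
      show "g ` unit_disc \<subseteq> Omega eps" unfolding g_def ud using inO[unfolded ud] Mb by auto
    qed
    have dg1: "deriv (\<lambda>t. fst (g t)) 0 = e * m'"
      unfolding g1 by (rule DERIV_imp_deriv) (rule derivative_eq_intros dM refl | simp)+
    have dg2: "deriv (\<lambda>t. snd (g t)) 0 = d2 * m'"
      unfolding g2 by (rule DERIV_imp_deriv) (rule DERIV_chain2[OF dP dM])
    have D2: "deriv2 f z = (e, d2)" unfolding deriv2_def dfst d2eq ..
    show ?thesis unfolding kobayashi_metric_def D2 fst_conv snd_conv poincare_metric_def
    proof (rule cInf_eq_minimum)
      have "cmod v0 / (1 - (cmod z)^2) = cmod (v0 / m') \<and> hol_disc_map (Omega eps) g \<and> g 0 = f z
          \<and> ((v0 / m') * fst (deriv2 g 0), (v0 / m') * snd (deriv2 g 0)) = (v0 * e, v0 * d2)"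
        using holg m'ne cm' unfolding deriv2_def dg1 dg2 by (simp add: g_def M0 norm_divide)
      then show "cmod v0 / (1 - (cmod z)^2) \<in> {cmod \<alpha> | \<alpha> F. hol_disc_map (Omega eps) F \<and> F 0 = f z
       \<and> (\<alpha> * fst (deriv2 F 0), \<alpha> * snd (deriv2 F 0)) = (v0 * e, v0 * d2)}"
        by blast
    next
      fix x assume "x \<in> {cmod \<alpha> | \<alpha> F. hol_disc_map (Omega eps) F \<and> F 0 = f z
       \<and> (\<alpha> * fst (deriv2 F 0), \<alpha> * snd (deriv2 F 0)) = (v0 * e, v0 * d2)}"
      then obtain \<alpha> G where x: "x = cmod \<alpha>" and hG: "hol_disc_map (Omega eps) G" and G0: "G 0 = f z"
        and dG: "\<alpha> * deriv (\<lambda>t. fst (G t)) 0 = v0 * e"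
        unfolding deriv2_def by auto
      define h where "h = (\<lambda>t. fst (G t))"
      have "cmod (deriv h 0) \<le> 1 - (cmod (h 0))^2"
        by (rule sp_deriv) (use hG in \<open>auto simp: hol_disc_map_def h_def ud intro!: Ofst\<close>)
      moreover have "cmod (h 0) = cmod z" unfolding h_def G0 feq using e1 by (simp add: norm_mult)
      ultimately have hd: "cmod (deriv h 0) \<le> 1 - (cmod z)^2" by simp
      have "cmod v0 = cmod \<alpha> * cmod (deriv h 0)"
        using arg_cong[OF dG, of cmod] e1 unfolding h_def by (simp add: norm_mult)
      also have "\<dots> \<le> cmod \<alpha> * (1 - (cmod z)^2)" using hd by (intro mult_left_mono) auto
      finally show "cmod v0 / (1 - (cmod z)^2) \<le> x" unfolding x using kp by (simp add: divide_le_eq)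
    qed
  qed
  show ?thesis
    unfolding complex_geodesic_def inf_complex_geodesic_def
    using img holf geo inf by blast
qed

end
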